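(* For every (possibly open) term $t$ with $k\notin\mathrm{fv}(t)$, $t\;(\approx^p_\emptyset)^{\circ}\;\mathcal Sk.(k\,t)$.
   Context: Terms of $\lambda_S$: $t ::= x \mid \lambda x.t \mid t\,t \mid \mathcal{S}k.t \mid \langle t\rangle$ (shift binds $k$; $\langle\cdot\rangle$ reset), up to $\alpha$-conversion; $\mathrm{fv}(t)$ free variables. Values $v::=\lambda x.t$. Pure contexts $E ::= \Box \mid v\,E \mid E\,t$; evaluation contexts $F ::= \Box \mid v\,F \mid F\,t \mid \langle F\rangle$. Reduction: $F[(\lambda x.t)v]\to F[t\{v/x\}]$; $F[\langle E[\mathcal Sk.t]\rangle]\to F[\langle t\{\lambda x.\langle E[x]\rangle/k\}\rangle]$ ($x\notin\mathrm{fv}(E)$); $F[\langle v\rangle]\to F[v]$; $\to^*$ reflexive-transitive closure. Program: term $\langle t\rangle$ (ranged over by $p$). Closures: for $R$ a relation on closed terms, $\widetilde R$ is the smallest relation containing $R$, all $(x,x)$, closed under all term constructors, restricted to closed terms; $\widehat R$ is the smallest relation on closed evaluation contexts with $\Box\widehat R\Box$, $v_0F_0\widehat Rv_1F_1$ if $F_0\widehat RF_1,v_0\widetilde Rv_1$; $F_0t_0\widehat RF_1t_1$ if $F_0\widehat RF_1,t_0\widetilde Rt_1$; $\langle F_0\rangle\widehat R\langle F_1\rangle$ if $F_0\widehat RF_1$. Environmental bisimilarity for programs: an environment $\mathcal E$ is a relation on closed values; an environmental relation $\mathcal X$ is a set of environments and triples $(\mathcal E,t_0,t_1)$, $t_0,t_1$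 closed, written $t_0\mathcal X_{\mathcal E}t_1$. $\mathcal X$ is an environmental bisimulation for programs if (1) if $t_0\mathcal X_{\mathcal E}t_1$ and $t_0,t_1$ are not both programs, then for all pure $E_0\widehat{\mathcal E}E_1$, $\langle E_0[t_0]\rangle\mathcal X_{\mathcal E}\langle E_1[t_1]\rangle$; (2) if $p_0\mathcal X_{\mathcal E}p_1$: (a) $p_0\to p_0'$ (program) implies $p_1\to^*p_1'$ (program) with $p_0'\mathcal X_{\mathcal E}p_1'$; (b) $p_0\to v_0$ implies $p_1\to^*v_1$ and $\{(v_0,v_1)\}\cup\mathcal E\in\mathcal X$; (c) symmetric conditions; (3) for $\mathcal E\in\mathcal X$, $(\lambda x.t_0)\mathcal E(\lambda x.t_1)$ and $v_0\widetilde{\mathcal E}v_1$ imply $t_0\{v_0/x\}\mathcal X_{\mathcal E}t_1\{v_1/x\}$. $\approx^p$ is the largest such relation; $t_0\approx^p_{\emptyset}t_1$ means $(\emptyset,t_0,t_1)\in\approx^p$. Open extension: for terms $t_0,t_1$ with $\vec x=\mathrm{fv}(t_0)\cup\mathrm{fv}(t_1)$, $t_0\,(\approx^p_\emptyset)^\circ\,t_1$ iff $\lambda\vec x.t_0\approx^p_\emptyset\lambda\vec x.t_1$, where $\lambda\vec x.t$ abstracts the variables of $\vec x$ in succession. *)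

theory Defs
  imports Main
begin

text \<open>Terms up to alpha-conversion are represented with de Bruijn indices.
  Both Lam and Shift bind index 0 in their body.  A free index n (at top level)
  denotes the free variable named n.\<close>

datatype trm = Var nat | Lam trm | App trm trm | Shift trm | Reset trm

fun fv :: "trm \<Rightarrow> nat set" where
  "fv (Var n) = {n}"
| "fv (Lam t) = (\<lambda>n. n - 1) ` (fv t - {0})"
| "fv (App t s) = fv t \<union> fv s"
| "fv (Shift t) = (\<lambda>n. n - 1) ` (fv t - {0})"
| "fv (Reset t) = fv t"

definition closed :: "trm \<Rightarrow> bool" where
  "closed t \<longleftrightarrow> fv t = {}"

definition is_val :: "trm \<Rightarrow> bool" where
  "is_val t \<longleftrightarrow> (\<exists>b. t = Lam b)"

definition is_prog :: "trm \<Rightarrow> bool" where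
  "is_prog t \<longleftrightarrow> (\<exists>s. t = Reset s)"

fun lift :: "nat \<Rightarrow> trm \<Rightarrow> trm" where
  "lift k (Var i) = (if i < k then Var i else Var (Suc i))"
| "lift k (Lam t) = Lam (lift (Suc k) t)"
| "lift k (App t s) = App (lift k t) (lift k s)"
| "lift k (Shift t) = Shift (lift (Suc k) t)"
| "lift k (Reset t) = Reset (lift k t)"

text \<open>Capture-avoiding substitution: subst t k s replaces index k by s
  (and decrements the larger indices).  t{v/x} for the body t of a binder is subst t 0 v.\<close>
fun subst :: "trm \<Rightarrow> nat \<Rightarrow> trm \<Rightarrow> trm" where
  "subst (Var i) k s = (if i < k then Var i else if i = k then s else Var (i - 1))"
| "subst (Lam t) k s = Lam (subst t (Suc k) (lift 0 s))"
| "subst (App t u) k s = App (subst t k s) (subst u k s)"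
| "subst (Shift t) k s = Shift (subst t (Suc k) (lift 0 s))"
| "subst (Reset t) k s = Reset (subst t k s)"

datatype ctx = Hole | CAppR trm ctx | CAppL ctx trm | CReset ctx

fun plug :: "ctx \<Rightarrow> trm \<Rightarrow> trm" where
  "plug Hole t = t"
| "plug (CAppR v F) t = App v (plug F t)"
| "plug (CAppL F s) t = App (plug F t) s"
| "plug (CReset F) t = Reset (plug F t)"

fun lift_ctx :: "nat \<Rightarrow> ctx \<Rightarrow> ctx" where
  "lift_ctx k Hole = Hole"
| "lift_ctx k (CAppR v F) = CAppR (lift k v) (lift_ctx k F)"
| "lift_ctx k (CAppL F s) = CAppL (lift_ctx k F) (lift k s)"
| "lift_ctx k (CReset F) = CReset (lift_ctx k F)"

fun pure_ctx :: "ctx \<Rightarrow> bool" where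
  "pure_ctx Hole = True"
| "pure_ctx (CAppR v F) = (is_val v \<and> pure_ctx F)"
| "pure_ctx (CAppL F s) = pure_ctx F"
| "pure_ctx (CReset F) = False"

fun eval_ctx :: "ctx \<Rightarrow> bool" where
  "eval_ctx Hole = True"
| "eval_ctx (CAppR v F) = (is_val v \<and> eval_ctx F)"
| "eval_ctx (CAppL F s) = eval_ctx F"
| "eval_ctx (CReset F) = eval_ctx F"

inductive red :: "trm \<Rightarrow> trm \<Rightarrow> bool" where
  beta: "\<lbrakk>eval_ctx F; is_val v\<rbrakk> \<Longrightarrow>
     red (plug F (App (Lam t) v)) (plug F (subst t 0 v))"
| shift: "\<lbrakk>eval_ctx F; pure_ctx E\<rbrakk> \<Longrightarrow>
     red (plug F (Reset (plug E (Shift t))))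
         (plug F (Reset (subst t 0 (Lam (Reset (plug (lift_ctx 0 E) (Var 0)))))))"
| reset: "\<lbrakk>eval_ctx F; is_val v\<rbrakk> \<Longrightarrow>
     red (plug F (Reset v)) (plug F v)"

abbreviation reds :: "trm \<Rightarrow> trm \<Rightarrow> bool" where
  "reds \<equiv> red\<^sup>*\<^sup>*"

type_synonym env = "(trm \<times> trm) set"

inductive tilde_raw :: "env \<Rightarrow> trm \<Rightarrow> trm \<Rightarrow> bool" for R where
  base: "(t0, t1) \<in> R \<Longrightarrow> tilde_raw R t0 t1"
| var: "tilde_raw R (Var n) (Var n)"
| lam: "tilde_raw R t0 t1 \<Longrightarrow> tilde_raw R (Lam t0) (Lam t1)"
| app: "\<lbrakk>tilde_raw R t0 t1; tilde_raw R s0 s1\<rbrakk> \<Longrightarrow> tilde_raw R (App t0 s0) (App t1 s1)"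
| shift: "tilde_raw R t0 t1 \<Longrightarrow> tilde_raw R (Shift t0) (Shift t1)"
| reset: "tilde_raw R t0 t1 \<Longrightarrow> tilde_raw R (Reset t0) (Reset t1)"

definition tilde :: "env \<Rightarrow> trm \<Rightarrow> trm \<Rightarrow> bool" where
  "tilde R t0 t1 \<longleftrightarrow> tilde_raw R t0 t1 \<and> closed t0 \<and> closed t1"

inductive ctx_hat :: "env \<Rightarrow> ctx \<Rightarrow> ctx \<Rightarrow> bool" for R where
  hole: "ctx_hat R Hole Hole"
| appR: "\<lbrakk>ctx_hat R F0 F1; is_val v0; is_val v1; tilde R v0 v1\<rbrakk> \<Longrightarrow>
     ctx_hat R (CAppR v0 F0) (CAppR v1 F1)"
| appL: "\<lbrakk>ctx_hat R F0 F1; tilde R t0 t1\<rbrakk> \<Longrightarrow> ctx_hat R (CAppL F0 t0) (CAppL F1 t1)"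
| reset: "ctx_hat R F0 F1 \<Longrightarrow> ctx_hat R (CReset F0) (CReset F1)"

text \<open>An environmental relation is given by its set of environments Es and its
  set of triples Ts.\<close>

definition is_env :: "env \<Rightarrow> bool" where
  "is_env E \<longleftrightarrow> (\<forall>a b. (a, b) \<in> E \<longrightarrow> closed a \<and> closed b \<and> is_val a \<and> is_val b)"

definition env_bisim :: "env set \<Rightarrow> (env \<times> trm \<times> trm) set \<Rightarrow> bool" where
  "env_bisim Es Ts \<longleftrightarrow>
    (\<forall>E\<in>Es. is_env E) \<and>
    (\<forall>E t0 t1. (E, t0, t1) \<in> Ts \<longrightarrow> is_env E \<and> closed t0 \<and> closed t1) \<and>
    \<comment> \<open>(1)\<close>
    (\<forall>E t0 t1. (E, t0, t1) \<in> Ts \<longrightarrow> \<not> (is_prog t0 \<and> is_prog t1) \<longrightarrow>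
       (\<forall>E0 E1. pure_ctx E0 \<and> pure_ctx E1 \<and> ctx_hat E E0 E1 \<longrightarrow>
          (E, Reset (plug E0 t0), Reset (plug E1 t1)) \<in> Ts)) \<and>
    \<comment> \<open>(2)\<close>
    (\<forall>E p0 p1. (E, p0, p1) \<in> Ts \<longrightarrow> is_prog p0 \<longrightarrow> is_prog p1 \<longrightarrow>
       (\<forall>p0'. red p0 p0' \<and> is_prog p0' \<longrightarrow>
          (\<exists>p1'. reds p1 p1' \<and> is_prog p1' \<and> (E, p0', p1') \<in> Ts)) \<and>
       (\<forall>v0. red p0 v0 \<and> is_val v0 \<longrightarrow>
          (\<exists>v1. reds p1 v1 \<and> is_val v1 \<and> insert (v0, v1) E \<in> Es)) \<and>
       (\<forall>p1'. red p1 p1' \<and> is_prog p1' \<longrightarrow>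
          (\<exists>p0'. reds p0 p0' \<and> is_prog p0' \<and> (E, p0', p1') \<in> Ts)) \<and>
       (\<forall>v1. red p1 v1 \<and> is_val v1 \<longrightarrow>
          (\<exists>v0. reds p0 v0 \<and> is_val v0 \<and> insert (v0, v1) E \<in> Es))) \<and>
    \<comment> \<open>(3)\<close>
    (\<forall>E\<in>Es. \<forall>t0 t1 v0 v1. (Lam t0, Lam t1) \<in> E \<and> is_val v0 \<and> is_val v1 \<and> tilde E v0 v1 \<longrightarrow>
       (E, subst t0 0 v0, subst t1 0 v1) \<in> Ts)"

definition prog_bisimilar :: "env \<Rightarrow> trm \<Rightarrow> trm \<Rightarrow> bool" where
  "prog_bisimilar E t0 t1 \<longleftrightarrow> (\<exists>Es Ts. env_bisim Es Ts \<and> (E, t0, t1) \<in> Ts)"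

text \<open>Abstraction of the free variable x: abst x t = \<lambda>x.t.\<close>
fun abst_aux :: "nat \<Rightarrow> nat \<Rightarrow> trm \<Rightarrow> trm" where
  "abst_aux x d (Var i) = (if i < d then Var i else if i = d + x then Var d else Var (Suc i))"
| "abst_aux x d (Lam t) = Lam (abst_aux x (Suc d) t)"
| "abst_aux x d (App t s) = App (abst_aux x d t) (abst_aux x d s)"
| "abst_aux x d (Shift t) = Shift (abst_aux x (Suc d) t)"
| "abst_aux x d (Reset t) = Reset (abst_aux x d t)"

definition abst :: "nat \<Rightarrow> trm \<Rightarrow> trm" where
  "abst x t = Lam (abst_aux x 0 t)"

definition abst_vars :: "nat list \<Rightarrow> trm \<Rightarrow> trm" where
  "abst_vars xs t = foldr abst xs t"

definition open_bisimilar :: "trm \<Rightarrow> trm \<Rightarrow> bool" where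
  "open_bisimilar t0 t1 \<longleftrightarrow>
     (let xs = sorted_list_of_set (fv t0 \<union> fv t1)
      in prog_bisimilar {} (abst_vars xs t0) (abst_vars xs t1))"

end

theory Submission
  imports Defs
begin


fun ccomp :: "ctx \<Rightarrow> ctx \<Rightarrow> ctx" where
  "ccomp Hole F = F"
| "ccomp (CAppR v E) F = CAppR v (ccomp E F)"
| "ccomp (CAppL E s) F = CAppL (ccomp E F) s"
| "ccomp (CReset E) F = CReset (ccomp E F)"

lemma plug_comp[simp]: "plug (ccomp E F) t = plug E (plug F t)"
  by (induction E) auto
lemma pure_comp: "pure_ctx E \<Longrightarrow> pure_ctx F \<Longrightarrow> pure_ctx (ccomp E F)"
  by (induction E) auto
lemma eval_comp: "eval_ctx E \<Longrightarrow> eval_ctx F \<Longrightarrow> eval_ctx (ccomp E F)"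
  by (induction E) auto
lemma lift_ctx_comp[simp]: "lift_ctx k (ccomp E F) = ccomp (lift_ctx k E) (lift_ctx k F)"
  by (induction E) auto
lemma lift_plug[simp]: "lift k (plug E t) = plug (lift_ctx k E) (lift k t)"
  by (induction E) auto

fun substc :: "ctx \<Rightarrow> nat \<Rightarrow> trm \<Rightarrow> ctx" where
  "substc Hole k v = Hole"
| "substc (CAppR u E) k v = CAppR (subst u k v) (substc E k v)"
| "substc (CAppL E s) k v = CAppL (substc E k v) (subst s k v)"
| "substc (CReset E) k v = CReset (substc E k v)"

lemma subst_plug[simp]: "subst (plug E t) k v = plug (substc E k v) (subst t k v)"
  by (induction E) auto

lemma is_val_lift[simp]: "is_val (lift k v) = is_val v"
  by (cases v) (auto simp: is_val_def)
lemma is_val_subst: "is_val v \<Longrightarrow> is_val (subst v k s)"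
  by (auto simp: is_val_def)
lemma pure_lift_ctx[simp]: "pure_ctx (lift_ctx k E) = pure_ctx E"
  by (induction E) auto
lemma pure_substc: "pure_ctx E \<Longrightarrow> pure_ctx (substc E k v)"
  by (induction E) (auto simp: is_val_subst)

definition ext :: "(nat \<Rightarrow> nat) \<Rightarrow> nat \<Rightarrow> nat" where
  "ext f i = (case i of 0 \<Rightarrow> 0 | Suc j \<Rightarrow> Suc (f j))"

lemma ext_0[simp]: "ext f 0 = 0" and ext_Suc[simp]: "ext f (Suc j) = Suc (f j)"
  by (auto simp: ext_def)

fun ren :: "(nat \<Rightarrow> nat) \<Rightarrow> trm \<Rightarrow> trm" where
  "ren f (Var i) = Var (f i)"
| "ren f (Lam t) = Lam (ren (ext f) t)"
| "ren f (App t s) = App (ren f t) (ren f s)"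
| "ren f (Shift t) = Shift (ren (ext f) t)"
| "ren f (Reset t) = Reset (ren f t)"

fun renc :: "(nat \<Rightarrow> nat) \<Rightarrow> ctx \<Rightarrow> ctx" where
  "renc f Hole = Hole"
| "renc f (CAppR v E) = CAppR (ren f v) (renc f E)"
| "renc f (CAppL E s) = CAppL (renc f E) (ren f s)"
| "renc f (CReset E) = CReset (renc f E)"

lemma ren_plug[simp]: "ren f (plug E t) = plug (renc f E) (ren f t)"
  by (induction E) auto

lemma ext_comp: "ext f \<circ> ext g = ext (f \<circ> g)"
  by (auto simp: fun_eq_iff ext_def split: nat.split)

lemma ren_comp: "ren f (ren g t) = ren (f \<circ> g) t"
  by (induction t arbitrary: f g) (auto simp: ext_comp)
lemma renc_comp: "renc f (renc g E) = renc (f \<circ> g) E"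
  by (induction E) (auto simp: ren_comp o_def)

definition liftf :: "nat \<Rightarrow> nat \<Rightarrow> nat" where
  "liftf k i = (if i < k then i else Suc i)"

lemma ext_liftf: "ext (liftf k) = liftf (Suc k)"
  by (auto simp: ext_def liftf_def fun_eq_iff split: nat.split)

lemma lift_ren: "lift k t = ren (liftf k) t"
  by (induction t arbitrary: k) (auto simp: ext_liftf liftf_def)
lemma lift_ctx_renc: "lift_ctx k E = renc (liftf k) E"
  by (induction E) (auto simp: lift_ren)

lemma is_val_ren[simp]: "is_val (ren f v) = is_val v"
  by (cases v) (auto simp: is_val_def)
lemma pure_renc[simp]: "pure_ctx (renc f E) = pure_ctx E"
  by (induction E) auto

lemma ren_ext_lift0: "ren (ext f) (lift 0 t) = lift 0 (ren f t)"
proof -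
  have "ext f \<circ> liftf 0 = liftf 0 \<circ> f" by (auto simp: fun_eq_iff liftf_def)
  then show ?thesis by (simp add: lift_ren ren_comp)
qed
lemma renc_ext_lift0: "renc (ext f) (lift_ctx 0 E) = lift_ctx 0 (renc f E)"
  by (induction E) (auto simp: ren_ext_lift0)

lemma lift_lift: "i \<le> j \<Longrightarrow> lift i (lift j t) = lift (Suc j) (lift i t)"
proof -
  assume "i \<le> j"
  then have "liftf i \<circ> liftf j = liftf (Suc j) \<circ> liftf i" by (auto simp: fun_eq_iff liftf_def)
  then show ?thesis by (simp add: lift_ren ren_comp)
qed

lemma lift_ctx_lift_ctx: "lift_ctx (Suc 0) (lift_ctx 0 E) = lift_ctx 0 (lift_ctx 0 E)"
  by (induction E) (auto simp: lift_lift)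

lemma subst_lift_comm: "j \<le> k \<Longrightarrow> subst (lift j t) (Suc k) (lift j v) = lift j (subst t k v)"
  by (induction t arbitrary: j k v) (auto simp: lift_lift)

lemma substc_lift_comm: "substc (lift_ctx 0 E) (Suc k) (lift 0 v) = lift_ctx 0 (substc E k v)"
  by (induction E) (auto simp: subst_lift_comm)

lemma subst_lift_cancel[simp]: "subst (lift k t) k v = t"
  by (induction t arbitrary: k v) auto

lemma substc_lift_cancel[simp]: "substc (lift_ctx k E) k v = E"
  by (induction E) auto

definition absf :: "nat \<Rightarrow> nat \<Rightarrow> nat \<Rightarrow> nat" where
  "absf x d i = (if i < d then i else if i = d + x then d else Suc i)"

lemma ext_absf: "ext (absf x d) = absf x (Suc d)"
  by (auto simp: ext_def absf_def fun_eq_iff split: nat.split)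

lemma abst_aux_ren: "abst_aux x d t = ren (absf x d) t"
  by (induction t arbitrary: d) (auto simp: ext_absf absf_def)

lemma mem_fv_Lam: "i \<in> fv (Lam t) \<longleftrightarrow> Suc i \<in> fv t"
proof
  assume "i \<in> fv (Lam t)"
  then obtain n where "n \<in> fv t" "n \<noteq> 0" "i = n - 1" by auto
  then show "Suc i \<in> fv t" by (cases n) auto
next
  assume "Suc i \<in> fv t"
  then show "i \<in> fv (Lam t)" by (auto intro!: image_eqI[where x="Suc i"])
qed

lemma mem_fv_Shift: "i \<in> fv (Shift t) \<longleftrightarrow> Suc i \<in> fv t"
  using mem_fv_Lam by simp

lemma fv_ren: "fv (ren f t) = f ` fv t"
proof (induction t arbitrary: f)
  case (Lam t)
  show ?case
  proof (rule set_eqI)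
    fix x
    have "x \<in> fv (ren f (Lam t)) \<longleftrightarrow> Suc x \<in> ext f ` fv t"
      using Lam by (simp only: ren.simps mem_fv_Lam)
    also have "\<dots> \<longleftrightarrow> (\<exists>j. Suc j \<in> fv t \<and> x = f j)"
    proof
      assume "Suc x \<in> ext f ` fv t"
      then obtain y where "y \<in> fv t" "Suc x = ext f y" by auto
      then show "\<exists>j. Suc j \<in> fv t \<and> x = f j" by (cases y) auto
    next
      assume "\<exists>j. Suc j \<in> fv t \<and> x = f j"
      then obtain j where "Suc j \<in> fv t" "x = f j" by auto
      then show "Suc x \<in> ext f ` fv t" by (auto intro!: image_eqI[where x="Suc j"])
    qed
    also have "\<dots> \<longleftrightarrow> x \<in> f ` fv (Lam t)"
      by (simp only: image_iff Bex_def mem_fv_Lam)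
    finally show "x \<in> fv (ren f (Lam t)) \<longleftrightarrow> x \<in> f ` fv (Lam t)" .
  qed
next
  case (Shift t)
  show ?case
  proof (rule set_eqI)
    fix x
    have "x \<in> fv (ren f (Shift t)) \<longleftrightarrow> Suc x \<in> ext f ` fv t"
      using Shift by (simp only: ren.simps mem_fv_Shift)
    also have "\<dots> \<longleftrightarrow> (\<exists>j. Suc j \<in> fv t \<and> x = f j)"
    proof
      assume "Suc x \<in> ext f ` fv t"
      then obtain y where "y \<in> fv t" "Suc x = ext f y" by auto
      then show "\<exists>j. Suc j \<in> fv t \<and> x = f j" by (cases y) auto
    next
      assume "\<exists>j. Suc j \<in> fv t \<and> x = f j"
      then obtain j where "Suc j \<in> fv t" "x = f j" by auto
      then show "Suc x \<in> ext f ` fv t" by (auto intro!: image_eqI[where x="Suc j"])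
    qed
    also have "\<dots> \<longleftrightarrow> x \<in> f ` fv (Shift t)"
      by (simp only: image_iff Bex_def mem_fv_Shift)
    finally show "x \<in> fv (ren f (Shift t)) \<longleftrightarrow> x \<in> f ` fv (Shift t)" .
  qed
qed (auto simp: image_Un)

fun bnd :: "nat \<Rightarrow> trm \<Rightarrow> bool" where
  "bnd k (Var i) = (i < k)"
| "bnd k (Lam t) = bnd (Suc k) t"
| "bnd k (App t s) = (bnd k t \<and> bnd k s)"
| "bnd k (Shift t) = bnd (Suc k) t"
| "bnd k (Reset t) = bnd k t"

lemma bnd_fv: "bnd k t \<longleftrightarrow> (\<forall>i\<in>fv t. i < k)"
proof (induction t arbitrary: k)
  case (Lam t)
  have "(\<forall>i\<in>fv (Lam t). i < k) \<longleftrightarrow> (\<forall>j\<in>fv t. j < Suc k)"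
  proof
    assume H: "\<forall>i\<in>fv (Lam t). i < k"
    show "\<forall>j\<in>fv t. j < Suc k"
    proof
      fix j assume j: "j \<in> fv t"
      show "j < Suc k"
      proof (cases j)
        case (Suc i)
        with j have "i \<in> fv (Lam t)" by (simp only: mem_fv_Lam)
        with H have "i < k" by blast
        then show ?thesis using Suc by simp
      qed simp
    qed
  next
    assume H: "\<forall>j\<in>fv t. j < Suc k"
    show "\<forall>i\<in>fv (Lam t). i < k"
    proof
      fix i assume "i \<in> fv (Lam t)"
      then have "Suc i \<in> fv t" by (simp only: mem_fv_Lam)
      with H show "i < k" by auto
    qed
  qed
  then show ?case using Lam by simp
next
  case (Shift t)
  have "(\<forall>i\<in>fv (Shift t). i < k) \<longleftrightarrow> (\<forall>j\<in>fv t. j < Suc k)"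
  proof
    assume H: "\<forall>i\<in>fv (Shift t). i < k"
    show "\<forall>j\<in>fv t. j < Suc k"
    proof
      fix j assume j: "j \<in> fv t"
      show "j < Suc k"
      proof (cases j)
        case (Suc i)
        with j have "i \<in> fv (Shift t)" by (simp only: mem_fv_Shift)
        with H have "i < k" by blast
        then show ?thesis using Suc by simp
      qed simp
    qed
  next
    assume H: "\<forall>j\<in>fv t. j < Suc k"
    show "\<forall>i\<in>fv (Shift t). i < k"
    proof
      fix i assume "i \<in> fv (Shift t)"
      then have "Suc i \<in> fv t" by (simp only: mem_fv_Shift)
      with H show "i < k" by auto
    qed
  qed
  then show ?case using Shift by simp
qed auto

lemma closed_bnd: "closed t \<longleftrightarrow> bnd 0 t"
  by (auto simp: closed_def bnd_fv)

lemma bnd_lift: "bnd k t \<Longrightarrow> bnd (Suc k) (lift j t)"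
  by (induction t arbitrary: k j) auto

lemma bnd_subst: "bnd (Suc k) t \<Longrightarrow> bnd k v \<Longrightarrow> j \<le> k \<Longrightarrow> bnd k (subst t j v)"
  by (induction t arbitrary: k j v) (auto simp: bnd_lift)

lemma bnd_plug_hole: "bnd k (plug E t) \<Longrightarrow> bnd k t"
  by (induction E) auto
lemma bnd_plug_swap: "bnd k (plug E t) \<Longrightarrow> bnd k s \<Longrightarrow> bnd k (plug E s)"
  by (induction E) auto




inductive step :: "trm \<Rightarrow> trm \<Rightarrow> bool" where
  sBeta: "is_val v \<Longrightarrow> step (App (Lam t) v) (subst t 0 v)"
| sAppL: "step t t' \<Longrightarrow> step (App t s) (App t' s)"
| sAppR: "is_val v \<Longrightarrow> step s s' \<Longrightarrow> step (App v s) (App v s')"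
| sResetV: "is_val v \<Longrightarrow> step (Reset v) v"
| sShift: "pure_ctx E \<Longrightarrow>
     step (Reset (plug E (Shift t))) (Reset (subst t 0 (Lam (Reset (plug (lift_ctx 0 E) (Var 0))))))"
| sReset: "step t t' \<Longrightarrow> step (Reset t) (Reset t')"

inductive_cases stepAppE: "step (App t s) r"
inductive_cases stepResetE: "step (Reset t) r"
inductive_cases stepLamE[elim!]: "step (Lam t) r"
inductive_cases stepVarE[elim!]: "step (Var i) r"
inductive_cases stepShiftE[elim!]: "step (Shift t) r"

lemma val_no_step: "is_val v \<Longrightarrow> \<not> step v r"
  by (auto simp: is_val_def)

lemma plug_shift_not_val: "pure_ctx E \<Longrightarrow> \<not> is_val (plug E (Shift u))"
  by (cases E) (auto simp: is_val_def)

lemma plug_shift_ne[simp]: "pure_ctx E \<Longrightarrow> plug E (Shift u) \<noteq> Lam b"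
  "pure_ctx E \<Longrightarrow> plug E (Shift u) \<noteq> Reset b"
  "pure_ctx E \<Longrightarrow> plug E (Shift u) \<noteq> Var i"
  by (cases E; auto)+

lemma stuck_no_step: "pure_ctx E \<Longrightarrow> \<not> step (plug E (Shift u)) r"
proof (induction E arbitrary: r)
  case (CAppR v E)
  then show ?case
    by (auto elim!: stepAppE simp: val_no_step plug_shift_not_val)
next
  case (CAppL E s)
  then show ?case
    by (auto elim!: stepAppE simp: val_no_step plug_shift_not_val)
qed auto

lemma plug_shift_inj: "pure_ctx E \<Longrightarrow> pure_ctx E' \<Longrightarrow> plug E (Shift u) = plug E' (Shift u') \<Longrightarrow> E = E' \<and> u = u'"
proof (induction E arbitrary: E')
  case Hole
  then show ?case by (cases E') auto
next
  case (CAppR v E)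
  then show ?case using plug_shift_not_val by (cases E') (auto simp: is_val_def)
next
  case (CAppL E s)
  then show ?case using plug_shift_not_val by (cases E') (auto simp: is_val_def)
next
  case (CReset E)
  then show ?case by simp
qed

lemma step_det: "step t a \<Longrightarrow> step t b \<Longrightarrow> a = b"
proof (induction t a arbitrary: b rule: step.induct)
  case (sBeta v t)
  from sBeta.prems show ?case
    by (rule stepAppE) (use sBeta.hyps val_no_step[of v] in \<open>auto simp: is_val_def\<close>)
next
  case (sAppL t t' s)
  from sAppL.prems show ?case
  proof (rule stepAppE)
    fix tt assume "t = Lam tt" then show ?thesis using sAppL.hyps by blast
  next
    fix t'' assume "step t t''" "b = App t'' s"
    then show ?thesis using sAppL.IH by simp
  next
    fix s' assume "is_val t" then show ?thesis using sAppL.hyps val_no_step by blast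
  qed
next
  case (sAppR v s s')
  from sAppR.prems show ?case
  proof (rule stepAppE)
    fix tt assume "is_val s" then show ?thesis using sAppR.hyps val_no_step by blast
  next
    fix t'' assume "step v t''" then show ?thesis using sAppR.hyps val_no_step by blast
  next
    fix s'' assume "step s s''" "b = App v s''"
    then show ?thesis using sAppR.IH by simp
  qed
next
  case (sResetV v)
  from sResetV.prems show ?case
    by (rule stepResetE) (use sResetV val_no_step[of v] plug_shift_not_val in \<open>auto\<close>)
next
  case (sShift E t)
  from sShift.prems show ?case
  proof (rule stepResetE)
    fix E' u assume "plug E (Shift t) = plug E' (Shift u)" "pure_ctx E'"
      "b = Reset (subst u 0 (Lam (Reset (plug (lift_ctx 0 E') (Var 0)))))"
    then show ?thesis using plug_shift_inj[of E E' t u] sShift.hyps by auto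
  qed (use sShift.hyps plug_shift_not_val stuck_no_step in auto)
next
  case (sReset t t')
  from sReset.prems show ?case
  proof (rule stepResetE)
    assume "is_val t" then show ?thesis using sReset.hyps val_no_step by blast
  next
    fix E u assume "t = plug E (Shift u)" "pure_ctx E"
    then show ?thesis using sReset.hyps stuck_no_step by blast
  next
    fix t'' assume "step t t''" "b = Reset t''"
    then show ?thesis using sReset.IH by simp
  qed
qed

lemma step_plug: "eval_ctx F \<Longrightarrow> step a b \<Longrightarrow> step (plug F a) (plug F b)"
  by (induction F) (auto intro: step.intros)

lemma red_step: "red a b \<Longrightarrow> step a b"
  by (induction rule: red.induct) (auto intro!: step_plug intro: step.intros)

lemma red_plug: "red a b \<Longrightarrow> eval_ctx G \<Longrightarrow> red (plug G a) (plug G b)"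
proof (induction rule: red.induct)
  case (beta F v t)
  then show ?case using red.beta[of "ccomp G F" v t] by (simp add: eval_comp)
next
  case (shift F E t)
  then show ?case using red.shift[of "ccomp G F" E t] by (simp add: eval_comp)
next
  case (reset F v)
  then show ?case using red.reset[of "ccomp G F" v] by (simp add: eval_comp)
qed

lemma step_red: "step a b \<Longrightarrow> red a b"
proof (induction rule: step.induct)
  case (sBeta v t)
  then show ?case using red.beta[of Hole v t] by simp
next
  case (sAppL t t' s)
  then show ?case using red_plug[of t t' "CAppL Hole s"] by simp
next
  case (sAppR v s s')
  then show ?case using red_plug[of s s' "CAppR v Hole"] by simp
next
  case (sResetV v)
  then show ?case using red.reset[of Hole v] by simp
next
  case (sShift E t)
  then show ?case using red.shift[of Hole E t] by simp
next
  case (sReset t t')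
  then show ?case using red_plug[of t t' "CReset Hole"] by simp
qed

lemma red_eq: "red = step"
  using red_step step_red by (intro ext) blast

lemma progress: "bnd 0 t \<Longrightarrow> is_val t \<or> (\<exists>t'. step t t') \<or> (\<exists>E u. pure_ctx E \<and> t = plug E (Shift u))"
proof (induction t)
  case (Var x)
  then show ?case by simp
next
  case (Lam t)
  then show ?case by (simp add: is_val_def)
next
  case (App t s)
  from App.prems have bt: "bnd 0 t" and bs: "bnd 0 s" by auto
  show ?case
  proof (cases "is_val t")
    case True
    then obtain b where tb: "t = Lam b" by (auto simp: is_val_def)
    from App.IH(2)[OF bs] show ?thesis
    proof (elim disjE exE conjE)
      assume "is_val s" then show ?thesis using tb sBeta by blast
    next
      fix s' assume "step s s'" then show ?thesis using True sAppR by blast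
    next
      fix E u assume "pure_ctx E" "s = plug E (Shift u)"
      then show ?thesis using True
        by (intro disjI2 exI[of _ "CAppR t E"] exI[of _ u]) auto
    qed
  next
    case False
    from App.IH(1)[OF bt] False show ?thesis
    proof (elim disjE exE conjE)
      fix t' assume "step t t'" then show ?thesis using sAppL by blast
    next
      fix E u assume "pure_ctx E" "t = plug E (Shift u)"
      then show ?thesis
        by (intro disjI2 exI[of _ "CAppL E s"] exI[of _ u]) auto
    qed simp
  qed
next
  case (Shift t)
  then show ?case by (intro disjI2 exI[of _ Hole]) auto
next
  case (Reset t)
  from Reset.IH Reset.prems show ?case
    by (auto intro: step.intros)
qed

lemma prog_steps: assumes "bnd 0 t" "is_prog t" shows "\<exists>t'. step t t'"
proof -
  obtain s where t: "t = Reset s" using assms(2) by (auto simp: is_prog_def)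
  with assms(1) have "bnd 0 s" by simp
  from progress[OF this] show ?thesis unfolding t by (auto intro: step.intros)
qed

lemma step_bnd: "step t t' \<Longrightarrow> bnd k t \<Longrightarrow> bnd k t'"
proof (induction arbitrary: k rule: step.induct)
  case (sBeta v t)
  then show ?case by (auto intro: bnd_subst)
next
  case (sShift E t)
  have "bnd k (plug E (Shift t))" using sShift by simp
  then have bt: "bnd (Suc k) t" using bnd_plug_hole by fastforce
  have "bnd (Suc k) (lift 0 (plug E (Shift t)))" using bnd_lift \<open>bnd k (plug E (Shift t))\<close> by blast
  then have "bnd (Suc k) (plug (lift_ctx 0 E) (Var 0))"
    by (auto intro: bnd_plug_swap)
  then show ?case using bt by (auto intro!: bnd_subst)
qed auto

lemma step_prog: "step t t' \<Longrightarrow> is_prog t \<Longrightarrow> is_prog t' \<or> is_val t'"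
  by (auto simp: is_prog_def elim!: stepResetE)




inductive rel :: "nat \<Rightarrow> trm \<Rightarrow> trm \<Rightarrow> bool" where
  rVar: "rel 0 (Var i) (Var i)"
| rLam: "rel n t0 t1 \<Longrightarrow> rel 0 (Lam t0) (Lam t1)"
| rApp: "rel n t0 t1 \<Longrightarrow> rel m s0 s1 \<Longrightarrow> rel (n + m) (App t0 s0) (App t1 s1)"
| rShift: "rel n t0 t1 \<Longrightarrow> rel 0 (Shift t0) (Shift t1)"
| rReset: "rel n t0 t1 \<Longrightarrow> rel n (Reset t0) (Reset t1)"
| rMark: "rel n t0 t1 \<Longrightarrow> rel (n + 3) t0 (Shift (App (Var 0) (lift 0 t1)))"
| rAdm: "pure_ctx E0 \<Longrightarrow> rel n s0 s1 \<Longrightarrow> rel m (Reset (plug (lift_ctx 0 E0) (Var 0))) (Reset B) \<Longrightarrow>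
         rel (n + m + 2) (Reset (plug E0 s0)) (Reset (App (Lam (Reset B)) s1))"
| rRR: "rel n (Reset a) (Reset b) \<Longrightarrow> rel (Suc n) (Reset a) (Reset (Reset b))"

inductive ctxrel :: "nat \<Rightarrow> ctx \<Rightarrow> ctx \<Rightarrow> bool" where
  cHole: "ctxrel 0 Hole Hole"
| cAppR: "rel a v0 v1 \<Longrightarrow> ctxrel b E0 E1 \<Longrightarrow> ctxrel (a + b) (CAppR v0 E0) (CAppR v1 E1)"
| cAppL: "ctxrel a E0 E1 \<Longrightarrow> rel b s0 s1 \<Longrightarrow> ctxrel (a + b) (CAppL E0 s0) (CAppL E1 s1)"
| cReset: "ctxrel a E0 E1 \<Longrightarrow> ctxrel a (CReset E0) (CReset E1)"

lemma rel_Lam_inv: "rel n t0 (Lam b) \<Longrightarrow> n = 0 \<and> (\<exists>b0 k. t0 = Lam b0 \<and> rel k b0 b)"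
  by (erule rel.cases) auto

lemma rel_val: "rel n t0 t1 \<Longrightarrow> is_val t1 \<Longrightarrow> is_val t0 \<and> n = 0"
  by (auto simp: is_val_def dest: rel_Lam_inv)

lemma rel_App_inv: "rel n t0 (App a b) \<Longrightarrow> \<exists>a0 b0 i j. t0 = App a0 b0 \<and> rel i a0 a \<and> rel j b0 b \<and> n = i + j"
  by (erule rel.cases) auto

lemma rel_Shift_inv: "rel n t0 (Shift u) \<Longrightarrow>
   (\<exists>u0 k. t0 = Shift u0 \<and> rel k u0 u \<and> n = 0) \<or> (\<exists>w k. u = App (Var 0) (lift 0 w) \<and> rel k t0 w \<and> n = k + 3)"
  by (erule rel.cases) auto

lemma rel_Reset_prog: "rel n t0 (Reset b) \<Longrightarrow> is_prog t0"
  by (erule rel.cases) (auto simp: is_prog_def)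

lemma rel_Var_inv: "rel n t0 (Var i) \<Longrightarrow> t0 = Var i"
  by (erule rel.cases) auto

lemma rel_prog_right: "rel n t0 t1 \<Longrightarrow> is_prog t0 \<Longrightarrow> \<not> is_val t1"
  by (auto simp: is_val_def is_prog_def dest: rel_Lam_inv)

lemma rel_refl: "\<exists>n. rel n t t"
  by (induction t) (auto intro: rel.intros)

lemma rel_ren: "rel n t0 t1 \<Longrightarrow> rel n (ren f t0) (ren f t1)"
proof (induction arbitrary: f rule: rel.induct)
  case (rMark n t0 t1)
  then show ?case using rel.rMark[OF rMark.IH[of f]] by (simp add: ren_ext_lift0)
next
  case (rAdm E0 n s0 s1 m B)
  have "rel m (ren (ext f) (Reset (plug (lift_ctx 0 E0) (Var 0)))) (ren (ext f) (Reset B))"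
    using rAdm.IH(2) .
  then have "rel m (Reset (plug (lift_ctx 0 (renc f E0)) (Var 0))) (Reset (ren (ext f) B))"
    by (simp add: renc_ext_lift0)
  from rel.rAdm[OF _ rAdm.IH(1) this] rAdm.hyps(1) show ?case by simp
qed (auto intro: rel.intros)

lemma rel_lift: "rel n t0 t1 \<Longrightarrow> rel n (lift k t0) (lift k t1)"
  by (simp add: lift_ren rel_ren)

lemma ctxrel_ren: "ctxrel a E0 E1 \<Longrightarrow> ctxrel a (renc f E0) (renc f E1)"
  by (induction rule: ctxrel.induct) (auto intro: ctxrel.intros rel_ren)

lemma ctxrel_lift: "ctxrel a E0 E1 \<Longrightarrow> ctxrel a (lift_ctx k E0) (lift_ctx k E1)"
  by (simp add: lift_ctx_renc ctxrel_ren)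

lemma rel_plug: "ctxrel a E0 E1 \<Longrightarrow> rel b t0 t1 \<Longrightarrow> rel (a + b) (plug E0 t0) (plug E1 t1)"
proof (induction arbitrary: b t0 t1 rule: ctxrel.induct)
  case cHole
  then show ?case by simp
next
  case (cAppR a v0 v1 b' E0 E1)
  from rel.rApp[OF cAppR.hyps(1) cAppR.IH[OF cAppR.prems]] show ?case by (simp add: add.assoc)
next
  case (cAppL a E0 E1 b' s0 s1)
  from rel.rApp[OF cAppL.IH[OF cAppL.prems] cAppL.hyps(2)] show ?case by (simp add: ac_simps)
next
  case (cReset a E0 E1)
  then show ?case by (auto intro: rel.intros)
qed

lemma ctxrel_pure: "ctxrel a E0 E1 \<Longrightarrow> pure_ctx E1 \<Longrightarrow> pure_ctx E0"
  by (induction rule: ctxrel.induct) (auto dest: rel_val)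

lemma rel_decomp: "rel n t0 (plug E1 y) \<Longrightarrow> pure_ctx E1 \<Longrightarrow>
   \<exists>E0 x a b. t0 = plug E0 x \<and> pure_ctx E0 \<and> ctxrel a E0 E1 \<and> rel b x y \<and> n = a + b"
proof (induction E1 arbitrary: t0 n)
  case Hole
  then show ?case by (intro exI[of _ Hole] exI[of _ t0] exI[of _ 0] exI[of _ n]) (auto intro: ctxrel.intros)
next
  case (CAppR v1 E1)
  from rel_App_inv[of n t0 v1 "plug E1 y"] CAppR.prems obtain a0 b0 i j
    where t0: "t0 = App a0 b0" and r1: "rel i a0 v1" and r2: "rel j b0 (plug E1 y)" and n: "n = i + j" by auto
  from CAppR.IH[OF r2] CAppR.prems obtain E0 x a b where
    h: "b0 = plug E0 x" "pure_ctx E0" "ctxrel a E0 E1" "rel b x y" "j = a + b" by auto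
  have vv: "is_val a0" "i = 0" using rel_val[OF r1] CAppR.prems by auto
  show ?case
    apply (rule exI[of _ "CAppR a0 E0"], rule exI[of _ x], rule exI[of _ "i + a"], rule exI[of _ b])
    using h t0 n vv r1 ctxrel.cAppR[of i a0 v1 a E0 E1] by auto
next
  case (CAppL E1 s1)
  from rel_App_inv[of n t0 "plug E1 y" s1] CAppL.prems obtain a0 b0 i j
    where t0: "t0 = App a0 b0" and r1: "rel i a0 (plug E1 y)" and r2: "rel j b0 s1" and n: "n = i + j" by auto
  from CAppL.IH[OF r1] CAppL.prems obtain E0 x a b where
    h: "a0 = plug E0 x" "pure_ctx E0" "ctxrel a E0 E1" "rel b x y" "i = a + b" by auto
  show ?case
    apply (rule exI[of _ "CAppL E0 b0"], rule exI[of _ x], rule exI[of _ "a + j"], rule exI[of _ b])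
    using h t0 n r2 by (auto intro: ctxrel.intros)
next
  case (CReset E1)
  then show ?case by simp
qed

lemma rel_subst: "rel n t0 t1 \<Longrightarrow> rel 0 v0 v1 \<Longrightarrow> rel n (subst t0 k v0) (subst t1 k v1)"
proof (induction arbitrary: k v0 v1 rule: rel.induct)
  case (rVar i)
  then show ?case by (auto intro: rel.intros)
next
  case (rLam n t0 t1)
  have "rel 0 (lift 0 v0) (lift 0 v1)" using rel_lift[OF rLam.prems] .
  from rel.rLam[OF rLam.IH[OF this]] show ?case by simp
next
  case (rShift n t0 t1)
  have "rel 0 (lift 0 v0) (lift 0 v1)" using rel_lift[OF rShift.prems] .
  from rel.rShift[OF rShift.IH[OF this]] show ?case by simp
next
  case (rMark n t0 t1)
  from rel.rMark[OF rMark.IH[OF rMark.prems, of k]] show ?case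
    by (simp add: subst_lift_comm[of 0 k, simplified])
next
  case (rAdm E0 n s0 s1 m B)
  have l: "rel 0 (lift 0 v0) (lift 0 v1)" using rel_lift[OF rAdm.prems] .
  have "rel m (subst (Reset (plug (lift_ctx 0 E0) (Var 0))) (Suc k) (lift 0 v0)) (subst (Reset B) (Suc k) (lift 0 v1))"
    using rAdm.IH(2)[OF l] .
  then have "rel m (Reset (plug (lift_ctx 0 (substc E0 k v0)) (Var 0))) (Reset (subst B (Suc k) (lift 0 v1)))"
    by (simp add: substc_lift_comm)
  from rel.rAdm[OF pure_substc[OF rAdm.hyps(1)] rAdm.IH(1)[OF rAdm.prems] this] show ?case by simp
qed (auto intro: rel.intros)




lemma pure_eval: "pure_ctx E \<Longrightarrow> eval_ctx E"
  by (induction E) auto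

lemma app_lam_plug_shift:
  assumes "App (Lam K) s = plug E (Shift u)" "pure_ctx E"
  shows "\<exists>E'. E = CAppR (Lam K) E' \<and> s = plug E' (Shift u) \<and> pure_ctx E'"
  using assms
proof (cases E)
  case (CAppL E'' s')
  then show ?thesis using assms plug_shift_ne(1)[of E'' u K] by auto
qed auto

lemma admin_cont:
  assumes "pure_ctx E0" "ctxrel a E0' E" "rel m (Reset (plug (lift_ctx 0 E0) (Var 0))) (Reset B)"
  shows "rel (a + m + 2) (Reset (plug (lift_ctx 0 (ccomp E0 E0')) (Var 0)))
             (Reset (plug (lift_ctx 0 (CAppR (Lam (Reset B)) E)) (Var 0)))"
proof -
  have r1: "rel (a + 0) (plug (lift_ctx 0 E0') (Var 0)) (plug (lift_ctx 0 E) (Var 0))"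
    using rel_plug[OF ctxrel_lift[OF assms(2)] rVar] .
  have "rel m (lift (Suc 0) (Reset (plug (lift_ctx 0 E0) (Var 0)))) (lift (Suc 0) (Reset B))"
    using rel_lift[OF assms(3)] .
  then have r2: "rel m (Reset (plug (lift_ctx 0 (lift_ctx 0 E0)) (Var 0))) (Reset (lift (Suc 0) B))"
    by (simp add: lift_ctx_lift_ctx)
  from rel.rAdm[OF _ r1 r2] assms(1) show ?thesis by simp
qed

lemma simA: "rel n t0 t1 \<Longrightarrow> step t1 t1' \<Longrightarrow>
  (\<exists>m<n. rel m t0 t1') \<or> (\<exists>t0' m. step t0 t0' \<and> rel m t0' t1')"
proof (induction arbitrary: t1' rule: rel.induct)
  case (rVar i)
  then show ?case by auto
next
  case (rLam n t0 t1)
  then show ?case by auto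
next
  case (rShift n t0 t1)
  then show ?case by auto
next
  case (rMark n t0 t1)
  then show ?case by auto
next
  case (rApp n t0 t1 m s0 s1)
  from rApp.prems show ?case
  proof (rule stepAppE)
    fix b1 assume t1: "t1 = Lam b1" "t1' = subst b1 0 s1" "is_val s1"
    from rel_Lam_inv[of n t0 b1] rApp.hyps(1) t1 obtain b0 k where b0: "t0 = Lam b0" "rel k b0 b1" by blast
    from rel_val[OF rApp.hyps(2) t1(3)] have "is_val s0" "m = 0" by auto
    then have "step (App t0 s0) (subst b0 0 s0)" "rel k (subst b0 0 s0) t1'"
      using b0 t1 rApp.hyps(2) sBeta rel_subst by auto
    then show ?thesis by blast
  next
    fix t1'' assume h: "t1' = App t1'' s1" "step t1 t1''"
    from rApp.IH(1)[OF h(2)] show ?thesis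
    proof (elim disjE exE conjE)
      fix k assume "k < n" "rel k t0 t1''"
      then show ?thesis using h rApp.hyps(2) rel.rApp[of k t0 t1'' m s0 s1] by auto
    next
      fix t0' k assume "step t0 t0'" "rel k t0' t1''"
      then show ?thesis using h rApp.hyps(2) rel.rApp[of k t0' t1'' m s0 s1] sAppL by blast
    qed
  next
    fix s1'' assume h: "t1' = App t1 s1''" "is_val t1" "step s1 s1''"
    have v0: "is_val t0" using rel_val[OF rApp.hyps(1) h(2)] by simp
    from rApp.IH(2)[OF h(3)] show ?thesis
    proof (elim disjE exE conjE)
      fix k assume "k < m" "rel k s0 s1''"
      then show ?thesis using h rApp.hyps(1) rel.rApp[of n t0 t1 k s0 s1''] by auto
    next
      fix s0' k assume "step s0 s0'" "rel k s0' s1''"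
      then show ?thesis using h rApp.hyps(1) rel.rApp[of n t0 t1 k s0' s1''] sAppR v0 by blast
    qed
  qed
next
  case (rReset n t0 t1)
  from rReset.prems show ?case
  proof (rule stepResetE)
    assume h: "t1' = t1" "is_val t1"
    have "is_val t0" using rel_val[OF rReset.hyps h(2)] by simp
    then show ?thesis using h rReset.hyps sResetV by blast
  next
    fix E u assume h: "t1 = plug E (Shift u)"
      "t1' = Reset (subst u 0 (Lam (Reset (plug (lift_ctx 0 E) (Var 0)))))" "pure_ctx E"
    from rel_decomp[of n t0 E "Shift u"] rReset.hyps h obtain E0 x a b where
      d: "t0 = plug E0 x" "pure_ctx E0" "ctxrel a E0 E" "rel b x (Shift u)" "n = a + b" by auto
    have K: "rel 0 (Lam (Reset (plug (lift_ctx 0 E0) (Var 0)))) (Lam (Reset (plug (lift_ctx 0 E) (Var 0))))"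
      using rel_plug[OF ctxrel_lift[OF d(3)] rVar] by (auto intro: rel.intros)
    from rel_Shift_inv[OF d(4)] show ?thesis
    proof (elim disjE exE conjE)
      fix u0 k assume "x = Shift u0" "rel k u0 u" "b = 0"
      then show ?thesis using d h sShift[OF d(2), of u0] rel_subst[OF \<open>rel k u0 u\<close> K, of 0]
        by (auto intro: rel.intros)
    next
      fix w k assume w: "u = App (Var 0) (lift 0 w)" "rel k x w" "b = k + 3"
      have "rel (a + 0) (Reset (plug (lift_ctx 0 E0) (Var 0))) (Reset (plug (lift_ctx 0 E) (Var 0)))"
        using rel_plug[OF ctxrel_lift[OF d(3)] rVar] by (auto intro: rel.intros)
      from rel.rAdm[OF d(2) w(2) this] have "rel (k + a + 2) (Reset t0) t1'"
        using d h w by simp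
      then show ?thesis using d w by auto
    qed
  next
    fix t1'' assume h: "t1' = Reset t1''" "step t1 t1''"
    from rReset.IH[OF h(2)] show ?thesis
    proof (elim disjE exE conjE)
      fix k assume "k < n" "rel k t0 t1''"
      then show ?thesis using h by (auto intro: rel.intros)
    next
      fix t0' k assume "step t0 t0'" "rel k t0' t1''"
      then show ?thesis using h by (auto intro: rel.intros step.intros)
    qed
  qed
next
  case (rAdm E0 n s0 s1 m B)
  from rAdm.prems show ?case
  proof (rule stepResetE)
    assume "t1' = App (Lam (Reset B)) s1" "is_val (App (Lam (Reset B)) s1)"
    then show ?thesis by (simp add: is_val_def)
  next
    fix E u assume h: "App (Lam (Reset B)) s1 = plug E (Shift u)"
      "t1' = Reset (subst u 0 (Lam (Reset (plug (lift_ctx 0 E) (Var 0)))))" "pure_ctx E"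
    from app_lam_plug_shift[OF h(1) h(3)] obtain E' where
      E': "E = CAppR (Lam (Reset B)) E'" "s1 = plug E' (Shift u)" "pure_ctx E'" by auto
    from rel_decomp[of n s0 E' "Shift u"] rAdm.hyps(2) E' obtain E0' x a b where
      d: "s0 = plug E0' x" "pure_ctx E0'" "ctxrel a E0' E'" "rel b x (Shift u)" "n = a + b" by auto
    have AC: "rel (a + m + 2) (Reset (plug (lift_ctx 0 (ccomp E0 E0')) (Var 0)))
             (Reset (plug (lift_ctx 0 (CAppR (Lam (Reset B)) E')) (Var 0)))"
      using admin_cont[OF rAdm.hyps(1) d(3) rAdm.hyps(3)] .
    have pc: "pure_ctx (ccomp E0 E0')" using pure_comp rAdm.hyps(1) d(2) by blast
    from rel_Shift_inv[OF d(4)] show ?thesis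
    proof (elim disjE exE conjE)
      fix u0 k assume "x = Shift u0" "rel k u0 u" "b = 0"
      have K: "rel 0 (Lam (Reset (plug (lift_ctx 0 (ccomp E0 E0')) (Var 0))))
                     (Lam (Reset (plug (lift_ctx 0 E) (Var 0))))"
        using AC E' by (auto intro: rel.intros)
      have st: "step (Reset (plug E0 s0)) (Reset (subst u0 0 (Lam (Reset (plug (lift_ctx 0 (ccomp E0 E0')) (Var 0))))))"
        using sShift[OF pc, of u0] d \<open>x = Shift u0\<close> by simp
      show ?thesis using st rel_subst[OF \<open>rel k u0 u\<close> K, of 0] h
        by (auto intro: rel.intros)
    next
      fix w k assume w: "u = App (Var 0) (lift 0 w)" "rel k x w" "b = k + 3"
      from rel.rAdm[OF pc w(2) AC] have "rel (k + (a + m + 2) + 2) (Reset (plug E0 s0)) t1'"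
        using d h w E' by simp
      then show ?thesis using d w by auto
    qed
  next
    fix r assume h: "t1' = Reset r" "step (App (Lam (Reset B)) s1) r"
    from h(2) show ?thesis
    proof (rule stepAppE)
      fix bb assume hb: "Lam (Reset B) = Lam bb" "r = subst bb 0 s1" "is_val s1"
      from rel_val[OF rAdm.hyps(2) hb(3)] have "is_val s0" "n = 0" by auto
      have s01: "rel 0 s0 s1" using rAdm.hyps(2) \<open>n = 0\<close> by simp
      have "rel m (subst (Reset (plug (lift_ctx 0 E0) (Var 0))) 0 s0) (subst (Reset B) 0 s1)"
        using rel_subst[OF rAdm.hyps(3) s01, of 0] .
      then have "rel m (Reset (plug E0 s0)) (Reset (subst B 0 s1))" by simp
      moreover have "bb = Reset B" using hb(1) by simp
      ultimately have "rel (Suc m) (Reset (plug E0 s0)) t1'" using h hb(2) rRR by simp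
      then show ?thesis using \<open>n = 0\<close> by auto
    next
      fix t' assume "step (Lam (Reset B)) t'" then show ?thesis by auto
    next
      fix s1'' assume hs: "r = App (Lam (Reset B)) s1''" "is_val (Lam (Reset B))" "step s1 s1''"
      from rAdm.IH(1)[OF hs(3)] show ?thesis
      proof (elim disjE exE conjE)
        fix k assume "k < n" "rel k s0 s1''"
        from rel.rAdm[OF rAdm.hyps(1) this(2) rAdm.hyps(3)] show ?thesis using h hs \<open>k < n\<close> by auto
      next
        fix s0' k assume "step s0 s0'" "rel k s0' s1''"
        have "step (Reset (plug E0 s0)) (Reset (plug E0 s0'))"
          using step_plug[of "CReset E0"] \<open>step s0 s0'\<close> rAdm.hyps(1) by (simp add: pure_eval)
        moreover from rel.rAdm[OF rAdm.hyps(1) \<open>rel k s0' s1''\<close> rAdm.hyps(3)]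
        have "rel (k + m + 2) (Reset (plug E0 s0')) t1'" using h hs by simp
        ultimately show ?thesis by blast
      qed
    qed
  qed
next
  case (rRR n a b)
  from rRR.prems show ?case
  proof (rule stepResetE)
    assume "t1' = Reset b" "is_val (Reset b)" then show ?thesis by (simp add: is_val_def)
  next
    fix E u assume "Reset b = plug E (Shift u)" "pure_ctx E"
    then show ?thesis using plug_shift_ne(2)[of E u b] by simp
  next
    fix r assume h: "t1' = Reset r" "step (Reset b) r"
    show ?thesis
    proof (cases "is_val b")
      case True
      then have "r = b" using h(2) sResetV step_det by blast
      then show ?thesis using h rRR.hyps by auto
    next
      case False
      then have pr: "is_prog r" using h(2) by (auto elim!: stepResetE simp: is_prog_def)
      from rRR.IH[OF h(2)] show ?thesis
      proof (elim disjE exE conjE)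
        fix k assume "k < n" "rel k (Reset a) r"
        then show ?thesis using h pr rel.rRR[of k a] by (auto simp: is_prog_def)
      next
        fix t0' k assume st: "step (Reset a) t0'" "rel k t0' r"
        from pr obtain rr where rr: "r = Reset rr" by (auto simp: is_prog_def)
        from rel_Reset_prog[of k t0' rr] st(2) rr obtain a' where "t0' = Reset a'"
          by (auto simp: is_prog_def)
        then show ?thesis using st h pr rel.rRR[of k a'] by (auto simp: is_prog_def)
      qed
    qed
  qed
qed




lemma prog_not_val: "is_prog t \<Longrightarrow> \<not> is_val t"
  by (auto simp: is_prog_def is_val_def)

lemma simB: "rel n t0 t1 \<Longrightarrow> bnd 0 t1 \<Longrightarrow> is_prog t1 \<Longrightarrow> step t0 t0' \<Longrightarrow>
   \<exists>t1'. step\<^sup>*\<^sup>* t1 t1' \<and> (\<exists>m. rel m t0' t1')"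
proof (induction n arbitrary: t1 rule: less_induct)
  case (less n)
  obtain t1'' where st: "step t1 t1''" using prog_steps less.prems by blast
  from simA[OF less.prems(1) st] show ?case
  proof (elim disjE exE conjE)
    fix m assume m: "m < n" "rel m t0 t1''"
    have b: "bnd 0 t1''" using step_bnd st less.prems(2) by blast
    have "is_prog t1''"
    proof -
      have "is_prog t1'' \<or> is_val t1''" using step_prog st less.prems(3) by blast
      moreover have "\<not> is_val t1''"
      proof
        assume "is_val t1''"
        then have "is_val t0" using rel_val m(2) by blast
        then show False using val_no_step less.prems(4) by blast
      qed
      ultimately show ?thesis by blast
    qed
    from less.IH[OF m(1) m(2) b this less.prems(4)] obtain t1' where
      "step\<^sup>*\<^sup>* t1'' t1'" "\<exists>m. rel m t0' t1'" by blast
    then show ?thesis using st converse_rtranclp_into_rtranclp[of step t1 t1'' t1'] by blast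
  next
    fix t0'' m assume "step t0 t0''" "rel m t0'' t1''"
    then have "t0'' = t0'" using step_det less.prems(4) by blast
    then show ?thesis using st \<open>rel m t0'' t1''\<close> by blast
  qed
qed

lemma steps_bnd: "step\<^sup>*\<^sup>* t t' \<Longrightarrow> bnd k t \<Longrightarrow> bnd k t'"
  by (induction rule: rtranclp_induct) (auto intro: step_bnd)

lemma steps_prog: "step\<^sup>*\<^sup>* t t' \<Longrightarrow> is_prog t \<Longrightarrow> is_prog t' \<or> is_val t'"
proof (induction rule: rtranclp_induct)
  case (step y z)
  then show ?case using step_prog val_no_step by blast
qed simp

definition Rel :: "trm \<Rightarrow> trm \<Rightarrow> bool" where "Rel a b \<longleftrightarrow> (\<exists>n. rel n a b)"

definition envR :: "env \<Rightarrow> bool" where "envR E \<longleftrightarrow> (\<forall>a b. (a, b) \<in> E \<longrightarrow> Rel a b)"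

definition Es :: "env set" where "Es = {E. is_env E \<and> envR E}"
definition Ts :: "(env \<times> trm \<times> trm) set" where
  "Ts = {(E, t0, t1). is_env E \<and> envR E \<and> closed t0 \<and> closed t1 \<and> Rel t0 t1}"

lemma tilde_rel: "tilde_raw E a b \<Longrightarrow> envR E \<Longrightarrow> Rel a b"
  by (induction rule: tilde_raw.induct) (auto simp: envR_def Rel_def intro: rel.intros)

lemma ctx_hat_rel: "ctx_hat E E0 E1 \<Longrightarrow> envR E \<Longrightarrow> \<exists>a. ctxrel a E0 E1"
  apply (induction rule: ctx_hat.induct)
     apply (auto simp: tilde_def intro: ctxrel.intros dest!: tilde_rel simp: Rel_def)
   apply (blast intro: ctxrel.intros)+
  done

lemma ctx_hat_bnd: "ctx_hat E E0 E1 \<Longrightarrow> bnd 0 t \<Longrightarrow> bnd 0 s \<Longrightarrow> bnd 0 (plug E0 t) \<and> bnd 0 (plug E1 s)"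
  by (induction arbitrary: t s rule: ctx_hat.induct) (auto simp: tilde_def closed_bnd)

lemma reds_eq: "reds = step\<^sup>*\<^sup>*"
  by (simp add: red_eq)

lemma env_insert: "is_env E \<Longrightarrow> envR E \<Longrightarrow> closed v0 \<Longrightarrow> closed v1 \<Longrightarrow> is_val v0 \<Longrightarrow> is_val v1 \<Longrightarrow>
   Rel v0 v1 \<Longrightarrow> insert (v0, v1) E \<in> Es"
  by (auto simp: Es_def is_env_def envR_def)

lemma c1:
  assumes T: "(E, t0, t1) \<in> Ts" and C: "pure_ctx E0" "pure_ctx E1" "ctx_hat E E0 E1"
  shows "(E, Reset (plug E0 t0), Reset (plug E1 t1)) \<in> Ts"
proof -
  from T have h: "is_env E" "envR E" "closed t0" "closed t1" "Rel t0 t1" by (auto simp: Ts_def)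
  from ctx_hat_rel C h(2) obtain a where "ctxrel a E0 E1" by blast
  moreover from h(5) obtain b where "rel b t0 t1" by (auto simp: Rel_def)
  ultimately have "Rel (Reset (plug E0 t0)) (Reset (plug E1 t1))"
    by (auto simp: Rel_def intro: rel.intros rel_plug)
  moreover have "bnd 0 (plug E0 t0) \<and> bnd 0 (plug E1 t1)"
    using ctx_hat_bnd C h by (auto simp: closed_bnd)
  ultimately show ?thesis
    using h by (auto simp: Ts_def closed_bnd)
qed

lemma c2a:
  assumes T: "(E, p0, p1) \<in> Ts" and P: "is_prog p0" "is_prog p1" and S: "red p0 p0'" "is_prog p0'"
  shows "\<exists>p1'. reds p1 p1' \<and> is_prog p1' \<and> (E, p0', p1') \<in> Ts"
proof -
  from T have h: "is_env E" "envR E" "bnd 0 p0" "bnd 0 p1" "Rel p0 p1" by (auto simp: Ts_def closed_bnd)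
  from h(5) obtain n where r: "rel n p0 p1" by (auto simp: Rel_def)
  have "step p0 p0'" using S red_eq by simp
  from simB[OF r h(4) P(2) this] obtain t1' m where st: "step\<^sup>*\<^sup>* p1 t1'" "rel m p0' t1'" by blast
  have "is_prog t1'" using steps_prog[OF st(1) P(2)] rel_val[OF st(2)] S prog_not_val by blast
  moreover have "bnd 0 t1'" "bnd 0 p0'" using steps_bnd st h step_bnd S red_eq by auto
  ultimately show ?thesis
    using st h by (auto simp: reds_eq Ts_def closed_bnd Rel_def)
qed

lemma c2b:
  assumes T: "(E, p0, p1) \<in> Ts" and P: "is_prog p0" "is_prog p1" and S: "red p0 v0" "is_val v0"
  shows "\<exists>v1. reds p1 v1 \<and> is_val v1 \<and> insert (v0, v1) E \<in> Es"
proof -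
  from T have h: "is_env E" "envR E" "bnd 0 p0" "bnd 0 p1" "Rel p0 p1" by (auto simp: Ts_def closed_bnd)
  from h(5) obtain n where r: "rel n p0 p1" by (auto simp: Rel_def)
  have "step p0 v0" using S red_eq by simp
  from simB[OF r h(4) P(2) this] obtain t1' m where st: "step\<^sup>*\<^sup>* p1 t1'" "rel m v0 t1'" by blast
  have "is_val t1'" using steps_prog[OF st(1) P(2)] rel_Reset_prog[of m v0] st(2) S prog_not_val
    by (auto simp: is_prog_def)
  moreover have "bnd 0 t1'" "bnd 0 v0" using steps_bnd st h step_bnd S red_eq by auto
  ultimately have "insert (v0, t1') E \<in> Es"
    using st h S by (intro env_insert) (auto simp: closed_bnd Rel_def)
  then show ?thesis using st \<open>is_val t1'\<close> by (auto simp: reds_eq)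
qed

lemma c2c:
  assumes T: "(E, p0, p1) \<in> Ts" and P: "is_prog p0" "is_prog p1" and S: "red p1 p1'" "is_prog p1'"
  shows "\<exists>p0'. reds p0 p0' \<and> is_prog p0' \<and> (E, p0', p1') \<in> Ts"
proof -
  from T have h: "is_env E" "envR E" "bnd 0 p0" "bnd 0 p1" "Rel p0 p1" by (auto simp: Ts_def closed_bnd)
  from h(5) obtain n where r: "rel n p0 p1" by (auto simp: Rel_def)
  have bp: "bnd 0 p1'" using step_bnd S red_eq h by auto
  from S red_eq have "step p1 p1'" by simp
  from simA[OF r this] show ?thesis
  proof (elim disjE exE conjE)
    fix m assume "m < n" "rel m p0 p1'"
    then show ?thesis using P h bp by (auto simp: Ts_def closed_bnd Rel_def)
  next
    fix p0' m assume "step p0 p0'" "rel m p0' p1'"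
    moreover have "is_prog p0'" using S rel_Reset_prog \<open>rel m p0' p1'\<close> by (auto simp: is_prog_def)
    moreover have "bnd 0 p0'" using step_bnd \<open>step p0 p0'\<close> h by auto
    ultimately show ?thesis using h bp by (auto simp: reds_eq Ts_def closed_bnd Rel_def)
  qed
qed

lemma c2d:
  assumes T: "(E, p0, p1) \<in> Ts" and P: "is_prog p0" "is_prog p1" and S: "red p1 v1" "is_val v1"
  shows "\<exists>v0. reds p0 v0 \<and> is_val v0 \<and> insert (v0, v1) E \<in> Es"
proof -
  from T have h: "is_env E" "envR E" "bnd 0 p0" "bnd 0 p1" "Rel p0 p1" by (auto simp: Ts_def closed_bnd)
  from h(5) obtain n where r: "rel n p0 p1" by (auto simp: Rel_def)
  have bp: "bnd 0 v1" using step_bnd S red_eq h by auto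
  from S red_eq have "step p1 v1" by simp
  from simA[OF r this] show ?thesis
  proof (elim disjE exE conjE)
    fix m assume "m < n" "rel m p0 v1"
    then have "is_val p0" using rel_val S by blast
    then show ?thesis using P prog_not_val by blast
  next
    fix p0' m assume "step p0 p0'" "rel m p0' v1"
    moreover have "is_val p0'" using S rel_val \<open>rel m p0' v1\<close> by blast
    moreover have "bnd 0 p0'" using step_bnd \<open>step p0 p0'\<close> h by auto
    ultimately have "insert (p0', v1) E \<in> Es"
      using h bp S by (intro env_insert) (auto simp: closed_bnd Rel_def)
    then show ?thesis using \<open>step p0 p0'\<close> \<open>is_val p0'\<close> by (auto simp: reds_eq)
  qed
qed

lemma c3:
  assumes E: "E \<in> Es" and H: "(Lam t0, Lam t1) \<in> E" "is_val v0" "is_val v1" "tilde E v0 v1"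
  shows "(E, subst t0 0 v0, subst t1 0 v1) \<in> Ts"
proof -
  from E have h: "is_env E" "envR E" by (auto simp: Es_def)
  from H h have "Rel (Lam t0) (Lam t1)" by (auto simp: envR_def)
  then obtain k where k: "rel k t0 t1" by (auto simp: Rel_def dest: rel_Lam_inv)
  from H h have "Rel v0 v1" by (auto simp: tilde_def intro: tilde_rel)
  then obtain j where "rel j v0 v1" by (auto simp: Rel_def)
  then have "rel 0 v0 v1" using rel_val H by blast
  from rel_subst[OF k this, of 0] have "Rel (subst t0 0 v0) (subst t1 0 v1)" by (auto simp: Rel_def)
  moreover have "bnd 0 (Lam t0)" "bnd 0 (Lam t1)" "bnd 0 v0" "bnd 0 v1"
    using H h by (auto simp: is_env_def tilde_def closed_bnd simp del: bnd.simps)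
  then have "bnd 0 (subst t0 0 v0)" "bnd 0 (subst t1 0 v1)"
    by (auto intro!: bnd_subst)
  ultimately show ?thesis
    using h by (auto simp: Ts_def closed_bnd)
qed

lemma bisim: "env_bisim Es Ts"
  unfolding env_bisim_def
  apply (intro conjI)
  subgoal by (simp add: Es_def)
  subgoal by (simp add: Ts_def)
  subgoal using c1 by blast
  subgoal using c2a c2b c2c c2d by blast
  subgoal using c3 by blast
  done




lemma fv_abst: "fv (abst x u) = fv u - {x}"
proof (rule set_eqI)
  fix i
  have "i \<in> fv (abst x u) \<longleftrightarrow> Suc i \<in> absf x 0 ` fv u"
    by (simp only: abst_def abst_aux_ren mem_fv_Lam fv_ren)
  also have "\<dots> \<longleftrightarrow> i \<in> fv u - {x}"
    by (auto simp: absf_def image_iff split: if_splits)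
  finally show "i \<in> fv (abst x u) \<longleftrightarrow> i \<in> fv u - {x}" .
qed

lemma fv_abst_vars: "fv (abst_vars xs u) = fv u - set xs"
  by (induction xs) (auto simp: abst_vars_def fv_abst)

lemma fv_marker: "fv (Shift (App (Var 0) (lift 0 t))) = fv t"
proof (rule set_eqI)
  fix i
  have "i \<in> fv (Shift (App (Var 0) (lift 0 t))) \<longleftrightarrow> Suc i \<in> fv (App (Var 0) (lift 0 t))"
    by (rule mem_fv_Shift)
  also have "\<dots> \<longleftrightarrow> Suc i \<in> liftf 0 ` fv t"
    by (simp add: lift_ren fv_ren)
  also have "\<dots> \<longleftrightarrow> i \<in> fv t"
    by (auto simp: liftf_def)
  finally show "i \<in> fv (Shift (App (Var 0) (lift 0 t))) \<longleftrightarrow> i \<in> fv t" .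
qed

lemma finite_fv: "finite (fv t)"
  by (induction t) auto

lemma rel_abst_vars: "rel n a b \<Longrightarrow> \<exists>m. rel m (abst_vars xs a) (abst_vars xs b)"
proof (induction xs)
  case Nil
  then show ?case by (auto simp: abst_vars_def)
next
  case (Cons x xs)
  then obtain m where "rel m (abst_vars xs a) (abst_vars xs b)" by blast
  then have "rel 0 (abst x (abst_vars xs a)) (abst x (abst_vars xs b))"
    by (auto simp: abst_def abst_aux_ren intro: rel.intros rel_ren)
  then show ?case by (auto simp: abst_vars_def)
qed

theorem lemma19:
  fixes t :: trm
  shows "open_bisimilar t (Shift (App (Var 0) (lift 0 t)))"
proof -
  define t' where "t' = Shift (App (Var 0) (lift 0 t))"
  define xs where "xs = sorted_list_of_set (fv t \<union> fv t')"
  have ft: "fv t' = fv t" unfolding t'_def by (rule fv_marker)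
  have sx: "set xs = fv t" unfolding xs_def ft by (simp add: finite_fv)
  obtain n where "rel n t t" using rel_refl by blast
  then have "rel (n + 3) t t'" unfolding t'_def by (rule rMark)
  then obtain m where r: "rel m (abst_vars xs t) (abst_vars xs t')" using rel_abst_vars by blast
  have c: "closed (abst_vars xs t)" "closed (abst_vars xs t')"
    by (auto simp: closed_def fv_abst_vars sx ft)
  have "({}, abst_vars xs t, abst_vars xs t') \<in> Ts"
    using r c by (auto simp: Ts_def is_env_def envR_def Rel_def)
  then have "prog_bisimilar {} (abst_vars xs t) (abst_vars xs t')"
    unfolding prog_bisimilar_def using bisim by blast
  then show ?thesis unfolding open_bisimilar_def Let_def xs_def t'_def .
qed


end
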